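(* Let $n,k\in\mathbb{N}$ with $0\le k\le\lfloor (n+2)/2\rfloor$. Then there are poset isomorphisms $(\mathcal{A}_k(J([n]\times[2])),\le_k)\cong(\mathcal{A}_k(\mathcal{C}(n+2,2)),\le_k)\cong\mathcal{C}(n+2,2k)$.
   Context: $[n]=\{1,\dots,n\}$; $[n]\times[2]$ has the product order and $J(Q)$ is the poset of order ideals of $Q$ under inclusion. For $k\le m$, $\mathcal{C}(m,k)$ is the set of $k$-element subsets of $[m]$ written as increasing sequences $(x_1<\dots<x_k)$, with $\mathbf{x}\le\mathbf{y}$ iff $x_i\le y_i$ for all $i$. For a finite poset $P$, $\mathcal{A}_k(P)$ is the set of antichains of $P$ of size $k$; for $A,B\in\mathcal{A}_k(P)$, $A\prec_k B$ means $A\setminus B=\{a\}$, $B\setminus A=\{b\}$ are singletons with $a<_P b$, and $\le_k$ is the reflexive transitive closure of $\prec_k$. *)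

theory Defs
  imports Main
begin

definition grid :: "nat \<Rightarrow> (nat \<times> nat) set" where
  "grid n = {1..n} \<times> {1..2}"

definition prod_le :: "nat \<times> nat \<Rightarrow> nat \<times> nat \<Rightarrow> bool" where
  "prod_le p q \<longleftrightarrow> fst p \<le> fst q \<and> snd p \<le> snd q"

definition order_ideals :: "'a set \<Rightarrow> ('a \<Rightarrow> 'a \<Rightarrow> bool) \<Rightarrow> 'a set set" where
  "order_ideals Q le = {I. I \<subseteq> Q \<and> (\<forall>x\<in>I. \<forall>y\<in>Q. le y x \<longrightarrow> y \<in> I)}"

definition Cset :: "nat \<Rightarrow> nat \<Rightarrow> nat set set" where
  "Cset m k = {S. S \<subseteq> {1..m} \<and> card S = k}"

definition C_le :: "nat set \<Rightarrow> nat set \<Rightarrow> bool" where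
  "C_le S T \<longleftrightarrow> list_all2 (\<le>) (sorted_list_of_set S) (sorted_list_of_set T)"

definition antichains_k :: "'a set \<Rightarrow> ('a \<Rightarrow> 'a \<Rightarrow> bool) \<Rightarrow> nat \<Rightarrow> 'a set set" where
  "antichains_k P le k =
     {A. A \<subseteq> P \<and> finite A \<and> card A = k \<and> (\<forall>a\<in>A. \<forall>b\<in>A. le a b \<longrightarrow> a = b)}"

definition prec_k :: "'a set \<Rightarrow> ('a \<Rightarrow> 'a \<Rightarrow> bool) \<Rightarrow> nat \<Rightarrow> 'a set \<Rightarrow> 'a set \<Rightarrow> bool" where
  "prec_k P le k A B \<longleftrightarrow> A \<in> antichains_k P le k \<and> B \<in> antichains_k P le k \<and>
     (\<exists>a b. A - B = {a} \<and> B - A = {b} \<and> le a b \<and> a \<noteq> b)"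

definition le_k :: "'a set \<Rightarrow> ('a \<Rightarrow> 'a \<Rightarrow> bool) \<Rightarrow> nat \<Rightarrow> 'a set \<Rightarrow> 'a set \<Rightarrow> bool" where
  "le_k P le k = (prec_k P le k)\<^sup>*\<^sup>*"

definition poset_iso :: "'a set \<Rightarrow> ('a \<Rightarrow> 'a \<Rightarrow> bool) \<Rightarrow> 'b set \<Rightarrow> ('b \<Rightarrow> 'b \<Rightarrow> bool) \<Rightarrow> bool" where
  "poset_iso X leX Y leY \<longleftrightarrow>
     (\<exists>f. bij_betw f X Y \<and> (\<forall>x\<in>X. \<forall>y\<in>X. leX x y \<longleftrightarrow> leY (f x) (f y)))"

end

theory Submission
  imports Defs
begin


lemma poset_iso_sym:
  assumes "poset_iso X leX Y leY" shows "poset_iso Y leY X leX"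
proof -
  obtain f where bf: "bij_betw f X Y" and o: "\<forall>x\<in>X. \<forall>y\<in>X. leX x y \<longleftrightarrow> leY (f x) (f y)"
    using assms unfolding poset_iso_def by blast
  let ?g = "the_inv_into X f"
  have bg: "bij_betw ?g Y X" using bf by (rule bij_betw_the_inv_into)
  have fg: "\<And>y. y \<in> Y \<Longrightarrow> f (?g y) = y" using bf
    by (meson bij_betw_def f_the_inv_into_f_bij_betw)
  have gX: "\<And>y. y \<in> Y \<Longrightarrow> ?g y \<in> X" using bg bij_betwE by blast
  have "\<forall>x\<in>Y. \<forall>y\<in>Y. leY x y \<longleftrightarrow> leX (?g x) (?g y)"
    using o fg gX by metis
  then show ?thesis unfolding poset_iso_def using bg by blast
qed

lemma poset_iso_trans:
  assumes "poset_iso X leX Y leY" "poset_iso Y leY Z leZ" shows "poset_iso X leX Z leZ"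
proof -
  obtain f where bf: "bij_betw f X Y" and o: "\<forall>x\<in>X. \<forall>y\<in>X. leX x y \<longleftrightarrow> leY (f x) (f y)"
    using assms(1) unfolding poset_iso_def by blast
  obtain g where bg: "bij_betw g Y Z" and o2: "\<forall>x\<in>Y. \<forall>y\<in>Y. leY x y \<longleftrightarrow> leZ (g x) (g y)"
    using assms(2) unfolding poset_iso_def by blast
  have "bij_betw (g \<circ> f) X Z" using bf bg by (rule bij_betw_trans)
  moreover have "\<forall>x\<in>X. \<forall>y\<in>X. leX x y \<longleftrightarrow> leZ ((g \<circ> f) x) ((g \<circ> f) y)"
    using o o2 bf by (auto dest: bij_betwE)
  ultimately show ?thesis unfolding poset_iso_def by blast
qed

lemma ac_transfer:
  assumes inj: "inj_on f P" and img: "f ` P \<subseteq> Q"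
    and o: "\<forall>x\<in>P. \<forall>y\<in>P. le x y \<longleftrightarrow> le' (f x) (f y)"
    and A: "A \<in> antichains_k P le k"
  shows "f ` A \<in> antichains_k Q le' k"
proof -
  have AP: "A \<subseteq> P" "finite A" "card A = k" "\<forall>a\<in>A. \<forall>b\<in>A. le a b \<longrightarrow> a = b"
    using A unfolding antichains_k_def by auto
  have "card (f ` A) = k" using AP inj by (metis card_image inj_on_subset)
  moreover have "\<forall>a\<in>f ` A. \<forall>b\<in>f ` A. le' a b \<longrightarrow> a = b"
    using AP o by (metis image_iff subsetD)
  moreover have "f ` A \<subseteq> Q" using AP img by blast
  ultimately show ?thesis unfolding antichains_k_def mem_Collect_eq using AP(2) by (intro conjI) auto
qed

lemma prec_transfer:
  assumes inj: "inj_on f P" and img: "f ` P \<subseteq> Q"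
    and o: "\<forall>x\<in>P. \<forall>y\<in>P. le x y \<longleftrightarrow> le' (f x) (f y)"
    and pr: "prec_k P le k A B"
  shows "prec_k Q le' k (f ` A) (f ` B)"
proof -
  have A: "A \<in> antichains_k P le k" and B: "B \<in> antichains_k P le k"
    using pr unfolding prec_k_def by blast+
  obtain a b where ab: "A - B = {a}" "B - A = {b}" "le a b" "a \<noteq> b"
    using pr unfolding prec_k_def by blast
  have AP: "A \<subseteq> P" "B \<subseteq> P" using A B unfolding antichains_k_def by blast+
  have "f ` A - f ` B = f ` (A - B)" using AP by (intro inj_on_image_set_diff[OF inj, symmetric]) auto
  hence 1: "f ` A - f ` B = {f a}" using ab by simp
  have "f ` B - f ` A = f ` (B - A)" using AP by (intro inj_on_image_set_diff[OF inj, symmetric]) auto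
  hence 2: "f ` B - f ` A = {f b}" using ab by simp
  have abP: "a \<in> P" "b \<in> P" using ab(1,2) AP by blast+
  have "le' (f a) (f b)" using o abP ab(3) by blast
  moreover have "f a \<noteq> f b" using inj abP ab(4) unfolding inj_on_def by blast
  moreover note ac_transfer[OF inj img o A] ac_transfer[OF inj img o B]
  ultimately show ?thesis unfolding prec_k_def using 1 2 by (intro conjI exI[of _ "f a"] exI[of _ "f b"]) simp_all
qed

lemma lek_transfer:
  assumes inj: "inj_on f P" and img: "f ` P \<subseteq> Q"
    and o: "\<forall>x\<in>P. \<forall>y\<in>P. le x y \<longleftrightarrow> le' (f x) (f y)"
    and r: "le_k P le k A B"
  shows "le_k Q le' k (f ` A) (f ` B)"
  using r unfolding le_k_def
proof (induction rule: rtranclp_induct)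
  case base then show ?case by simp
next
  case (step y z)
  show ?case using step(3) prec_transfer[OF inj img o step(2)]
    by (rule rtranclp.rtrancl_into_rtrancl)
qed

lemma iso_antichains:
  assumes "poset_iso P le Q le'"
  shows "poset_iso (antichains_k P le k) (le_k P le k) (antichains_k Q le' k) (le_k Q le' k)"
proof -
  obtain f where bf: "bij_betw f P Q" and o: "\<forall>x\<in>P. \<forall>y\<in>P. le x y \<longleftrightarrow> le' (f x) (f y)"
    using assms unfolding poset_iso_def by blast
  obtain g where bg: "bij_betw g Q P" and o2: "\<forall>x\<in>Q. \<forall>y\<in>Q. le' x y \<longleftrightarrow> le (g x) (g y)"
    using poset_iso_sym[OF assms] unfolding poset_iso_def by blast
  let ?g = "the_inv_into P f"
  have bg: "bij_betw ?g Q P" using bf by (rule bij_betw_the_inv_into)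
  have fg: "\<And>y. y \<in> Q \<Longrightarrow> f (?g y) = y" using bf
    by (meson bij_betw_def f_the_inv_into_f_bij_betw)
  have gf: "\<And>x. x \<in> P \<Longrightarrow> ?g (f x) = x" using bf
    by (meson bij_betw_def the_inv_into_f_f)
  have gX: "\<And>y. y \<in> Q \<Longrightarrow> ?g y \<in> P" using bg bij_betwE by blast
  have o2: "\<forall>x\<in>Q. \<forall>y\<in>Q. le' x y \<longleftrightarrow> le (?g x) (?g y)"
    using o fg gX by metis
  have injf: "inj_on f P" and imf: "f ` P \<subseteq> Q" using bf by (auto simp: bij_betw_def)
  have injg: "inj_on ?g Q" and img: "?g ` Q \<subseteq> P" using bg by (auto simp: bij_betw_def)
  have sub: "\<And>A. A \<in> antichains_k P le k \<Longrightarrow> A \<subseteq> P" unfolding antichains_k_def by auto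
  have subQ: "\<And>A. A \<in> antichains_k Q le' k \<Longrightarrow> A \<subseteq> Q" unfolding antichains_k_def by auto
  have gfA: "\<And>A. A \<subseteq> P \<Longrightarrow> ?g ` f ` A = A" using gf by (simp add: image_image subset_iff cong: image_cong)
  have fgA: "\<And>A. A \<subseteq> Q \<Longrightarrow> f ` ?g ` A = A" using fg by (simp add: image_image subset_iff cong: image_cong)
  have "bij_betw (\<lambda>A. f ` A) (antichains_k P le k) (antichains_k Q le' k)"
    apply (rule bij_betw_byWitness[where f'="\<lambda>A. ?g ` A"])
    using gfA fgA sub subQ ac_transfer[OF injf imf o] ac_transfer[OF injg img o2] by auto
  moreover have "\<forall>A\<in>antichains_k P le k. \<forall>B\<in>antichains_k P le k.
     le_k P le k A B \<longleftrightarrow> le_k Q le' k (f ` A) (f ` B)"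
  proof (intro ballI iffI)
    fix A B assume "A \<in> antichains_k P le k" "B \<in> antichains_k P le k" "le_k P le k A B"
    then show "le_k Q le' k (f ` A) (f ` B)" using lek_transfer[OF injf imf o] by blast
  next
    fix A B assume "A \<in> antichains_k P le k" "B \<in> antichains_k P le k" "le_k Q le' k (f ` A) (f ` B)"
    then show "le_k P le k A B" using lek_transfer[OF injg img o2, of k "f ` A" "f ` B"] gfA sub by metis
  qed
  ultimately show ?thesis unfolding poset_iso_def by blast
qed



definition pairs :: "nat \<Rightarrow> (nat \<times> nat) set" where
  "pairs m = {(x, y). 1 \<le> x \<and> x < y \<and> y \<le> m}"

lemma sorted_pair: "x < (y::nat) \<Longrightarrow> sorted_list_of_set {x, y} = [x, y]"
  by (simp add: sorted_list_of_set_insert)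

lemma C_le_pair: "x < (y::nat) \<Longrightarrow> x' < y' \<Longrightarrow> C_le {x, y} {x', y'} \<longleftrightarrow> x \<le> x' \<and> y \<le> y'"
  by (simp add: C_le_def sorted_pair)

lemma isoPC: "poset_iso (pairs m) prod_le (Cset m 2) C_le"
proof -
  let ?f = "\<lambda>p. {fst p, snd p}"
  have inj: "inj_on ?f (pairs m)"
    unfolding inj_on_def pairs_def by (auto simp: doubleton_eq_iff)
  have img: "?f ` pairs m = Cset m 2"
  proof
    show "?f ` pairs m \<subseteq> Cset m 2" unfolding pairs_def Cset_def by auto
  next
    show "Cset m 2 \<subseteq> ?f ` pairs m"
    proof
      fix S assume "S \<in> Cset m 2"
      then have S: "S \<subseteq> {1..m}" "card S = 2" unfolding Cset_def by auto
      then obtain x y where xy: "S = {x, y}" "x \<noteq> y" by (meson card_2_iff)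
      show "S \<in> ?f ` pairs m"
      proof (cases "x < y")
        case True
        then have "(x, y) \<in> pairs m" using S xy unfolding pairs_def by auto
        then show ?thesis using xy by force
      next
        case False
        then have "(y, x) \<in> pairs m" using S xy unfolding pairs_def by auto
        then show ?thesis using xy by (force simp: insert_commute)
      qed
    qed
  qed
  have "bij_betw ?f (pairs m) (Cset m 2)" using inj img by (simp add: bij_betw_def)
  moreover have "\<forall>p\<in>pairs m. \<forall>q\<in>pairs m. prod_le p q \<longleftrightarrow> C_le (?f p) (?f q)"
    unfolding pairs_def prod_le_def by (auto simp: C_le_pair)
  ultimately show ?thesis unfolding poset_iso_def by blast
qed

definition gI :: "nat \<Rightarrow> nat \<times> nat \<Rightarrow> (nat \<times> nat) set" where
  "gI n p = {(i, j) \<in> grid n. (j = 1 \<and> i + 2 \<le> snd p) \<or> (j = 2 \<and> i + 1 \<le> fst p)}"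

lemma initial_seg:
  assumes "S \<subseteq> {1..n::nat}" "\<forall>i\<in>S. \<forall>i'. 1 \<le> i' \<and> i' \<le> i \<longrightarrow> i' \<in> S"
  shows "S = {1..card S}"
proof (cases "S = {}")
  case True then show ?thesis by simp
next
  case False
  have fin: "finite S" using assms(1) finite_subset by blast
  let ?a = "Max S"
  have "?a \<in> S" using fin False by simp
  have "S = {1..?a}"
  proof
    show "S \<subseteq> {1..?a}" using assms(1) fin by auto
    show "{1..?a} \<subseteq> S" using assms(2) \<open>?a \<in> S\<close> by auto
  qed
  then have c: "card S = ?a" by (metis card_atLeastAtMost diff_Suc_1)
  show ?thesis by (subst c) (rule \<open>S = {1..?a}\<close>)
qed

lemma isoPJ: "poset_iso (pairs (n+2)) prod_le (order_ideals (grid n) prod_le) (\<subseteq>)"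
proof -
  have ideal: "gI n p \<in> order_ideals (grid n) prod_le" if "p \<in> pairs (n+2)" for p
    using that unfolding order_ideals_def gI_def grid_def prod_le_def pairs_def by auto
  have ord: "prod_le p q \<longleftrightarrow> gI n p \<subseteq> gI n q" if "p \<in> pairs (n+2)" "q \<in> pairs (n+2)" for p q
  proof
    assume "prod_le p q" then show "gI n p \<subseteq> gI n q"
      unfolding gI_def prod_le_def by auto
  next
    assume sub: "gI n p \<subseteq> gI n q"
    obtain x y where p: "p = (x, y)" by fastforce
    obtain x' y' where q: "q = (x', y')" by fastforce
    have r: "1 \<le> x" "x < y" "y \<le> n + 2" "1 \<le> x'" "x' < y'" "y' \<le> n + 2"
      using that p q unfolding pairs_def by auto
    have "y \<le> y'"
    proof (rule ccontr)
      assume "\<not> y \<le> y'"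
      then have "(y - 2, 1) \<in> gI n p" "(y - 2, 1) \<notin> gI n q"
        using r unfolding p q gI_def grid_def by auto
      then show False using sub by blast
    qed
    moreover have "x \<le> x'"
    proof (rule ccontr)
      assume "\<not> x \<le> x'"
      then have "(x - 1, 2) \<in> gI n p" "(x - 1, 2) \<notin> gI n q"
        using r unfolding p q gI_def grid_def by auto
      then show False using sub by blast
    qed
    ultimately show "prod_le p q" unfolding p q prod_le_def by simp
  qed
  have inj: "inj_on (gI n) (pairs (n+2))"
  proof (rule inj_onI)
    fix p q assume pq: "p \<in> pairs (n+2)" "q \<in> pairs (n+2)" "gI n p = gI n q"
    then have "prod_le p q" "prod_le q p" using ord by auto
    then show "p = q" unfolding prod_le_def by (simp add: prod_eq_iff)
  qed
  have surj: "I \<in> gI n ` pairs (n+2)" if I: "I \<in> order_ideals (grid n) prod_le" for I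
  proof -
    have Isub: "I \<subseteq> grid n" and Idown: "\<forall>x\<in>I. \<forall>y\<in>grid n. prod_le y x \<longrightarrow> y \<in> I"
      using I unfolding order_ideals_def by auto
    define r1 where "r1 = {i. (i, 1) \<in> I}"
    define r2 where "r2 = {i. (i, 2::nat) \<in> I}"
    have gi: "(i, j) \<in> grid n \<longleftrightarrow> 1 \<le> i \<and> i \<le> n \<and> 1 \<le> j \<and> j \<le> 2" for i j
      unfolding grid_def by simp
    have Id: "(i', j') \<in> I" if "(i, j) \<in> I" "1 \<le> i'" "i' \<le> i" "1 \<le> j'" "j' \<le> j" for i j i' j'
    proof -
      have "(i, j) \<in> grid n" using that Isub by blast
      then have "(i', j') \<in> grid n" using that gi by simp
      moreover have "prod_le (i', j') (i, j)" using that unfolding prod_le_def by simp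
      ultimately show ?thesis using Idown that(1) by blast
    qed
    have r1s: "r1 \<subseteq> {1..n}"
    proof
      fix i assume "i \<in> r1" then have "(i, 1) \<in> grid n" using Isub unfolding r1_def by blast
      then show "i \<in> {1..n}" using gi by simp
    qed
    have r2s: "r2 \<subseteq> {1..n}"
    proof
      fix i assume "i \<in> r2" then have "(i, 2) \<in> grid n" using Isub unfolding r2_def by blast
      then show "i \<in> {1..n}" using gi by simp
    qed
    have r1e: "r1 = {1..card r1}"
    proof (rule initial_seg[OF r1s], intro ballI allI impI)
      fix i i' assume "i \<in> r1" "1 \<le> i' \<and> i' \<le> i"
      then show "i' \<in> r1" using Id[of i 1 i' 1] unfolding r1_def by simp
    qed
    moreover have r2e: "r2 = {1..card r2}"
    proof (rule initial_seg[OF r2s], intro ballI allI impI)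
      fix i i' assume "i \<in> r2" "1 \<le> i' \<and> i' \<le> i"
      then show "i' \<in> r2" using Id[of i 2 i' 2] unfolding r2_def by simp
    qed
    moreover have "r2 \<subseteq> r1"
    proof
      fix i assume "i \<in> r2"
      then have "1 \<le> i" using r2s by auto
      then show "i \<in> r1" using Id[of i 2 i 1] \<open>i \<in> r2\<close> unfolding r1_def r2_def by simp
    qed
    moreover have "finite r1" using r1s finite_subset by blast
    ultimately have le: "card r2 \<le> card r1" "card r1 \<le> n"
      using card_mono r1s card_mono[OF finite_atLeastAtMost r1s] by auto
    have "I = gI n (card r2 + 1, card r1 + 2)"
    proof
      show "I \<subseteq> gI n (card r2 + 1, card r1 + 2)"
      proof
        fix z assume "z \<in> I"
        obtain i j where z: "z = (i, j)" by fastforce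
        have "j = 1 \<or> j = 2" "1 \<le> i" "i \<le> n" using Isub \<open>z \<in> I\<close> z unfolding grid_def by auto
        moreover have "j = 1 \<Longrightarrow> i \<le> card r1" using r1e \<open>z \<in> I\<close> z unfolding r1_def
          by (metis (no_types, lifting) atLeastAtMost_iff mem_Collect_eq)
        moreover have "j = 2 \<Longrightarrow> i \<le> card r2" using r2e \<open>z \<in> I\<close> z unfolding r2_def
          by (metis (no_types, lifting) atLeastAtMost_iff mem_Collect_eq)
        moreover have "z \<in> grid n" using Isub \<open>z \<in> I\<close> by blast
        ultimately show "z \<in> gI n (card r2 + 1, card r1 + 2)"
          unfolding gI_def z by auto
      qed
      show "gI n (card r2 + 1, card r1 + 2) \<subseteq> I"
      proof
        fix z assume zg: "z \<in> gI n (card r2 + 1, card r1 + 2)"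
        obtain i j where z: "z = (i, j)" by fastforce
        have "j = 1 \<and> i \<le> card r1 \<or> j = 2 \<and> i \<le> card r2" "1 \<le> i"
          using zg z unfolding gI_def grid_def by auto
        then show "z \<in> I" using r1e r2e z unfolding r1_def r2_def
          by (metis (no_types, lifting) atLeastAtMost_iff mem_Collect_eq)
      qed
    qed
    moreover have "(card r2 + 1, card r1 + 2) \<in> pairs (n+2)" using le unfolding pairs_def by auto
    ultimately show ?thesis by blast
  qed
  have "bij_betw (gI n) (pairs (n+2)) (order_ideals (grid n) prod_le)"
    unfolding bij_betw_def using inj ideal surj by blast
  then show ?thesis unfolding poset_iso_def using ord by blast
qed



definition U :: "(nat \<times> nat) set \<Rightarrow> nat set" where
  "U A = fst ` A \<union> snd ` A"

definition cnt :: "nat set \<Rightarrow> nat \<Rightarrow> nat" where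
  "cnt S t = card {x\<in>S. x \<le> t}"

definition cle :: "nat set \<Rightarrow> nat set \<Rightarrow> bool" where
  "cle S T \<longleftrightarrow> (\<forall>t. cnt T t \<le> cnt S t)"

definition Gm :: "nat \<Rightarrow> nat set \<Rightarrow> (nat \<times> nat) set" where
  "Gm k Z = (\<lambda>i. (sorted_list_of_set Z ! i, sorted_list_of_set Z ! (2*k - 1 - i))) ` {..<k}"

lemma ac_facts:
  assumes "A \<in> antichains_k (pairs m) prod_le k"
  shows "A \<subseteq> pairs m" "finite A" "card A = k" "\<And>p q. p \<in> A \<Longrightarrow> q \<in> A \<Longrightarrow> prod_le p q \<Longrightarrow> p = q"
  using assms unfolding antichains_k_def by auto

lemma ac_dist:
  assumes A: "A \<in> antichains_k (pairs m) prod_le k" and pq: "p \<in> A" "q \<in> A" "p \<noteq> q"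
  shows "fst p \<noteq> fst q" "snd p \<noteq> snd q" "fst p \<noteq> snd q" "fst p < fst q \<Longrightarrow> snd q < snd p"
proof -
  have "p \<in> pairs m" "q \<in> pairs m" using ac_facts(1)[OF A] pq by auto
  then have r: "fst p < snd p" "fst q < snd q" unfolding pairs_def by auto
  have n1: "\<not> prod_le p q" "\<not> prod_le q p" using ac_facts(4)[OF A] pq by metis+
  then show "fst p \<noteq> fst q" "snd p \<noteq> snd q" "fst p \<noteq> snd q" "fst p < fst q \<Longrightarrow> snd q < snd p"
    using r unfolding prod_le_def by auto
qed

lemma ac_pos:
  assumes A: "A \<in> antichains_k (pairs m) prod_le k" and p: "p \<in> A"
  shows "1 \<le> fst p" "fst p < snd p" "snd p \<le> m"
  using ac_facts(1)[OF A] p unfolding pairs_def by auto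

lemma U_sub: assumes A: "A \<in> antichains_k (pairs m) prod_le k" shows "U A \<subseteq> {1..m}"
  using ac_pos[OF A] unfolding U_def by fastforce

lemma U_fin: assumes A: "A \<in> antichains_k (pairs m) prod_le k" shows "finite (U A)"
  using U_sub[OF A] finite_subset by blast

lemma inj_fst: assumes A: "A \<in> antichains_k (pairs m) prod_le k" shows "inj_on fst A" "inj_on snd A"
  using ac_dist(1,2)[OF A] unfolding inj_on_def by blast+

lemma U_card: assumes A: "A \<in> antichains_k (pairs m) prod_le k" shows "card (U A) = 2 * k"
proof -
  have d: "fst ` A \<inter> snd ` A = {}"
  proof (rule ccontr)
    assume "fst ` A \<inter> snd ` A \<noteq> {}"
    then obtain p q where pq: "p \<in> A" "q \<in> A" "fst p = snd q" by force
    show False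
    proof (cases "p = q")
      case True then show False using ac_pos(2)[OF A pq(1)] pq by simp
    next
      case False then show False using ac_dist(3)[OF A pq(1,2)] pq by simp
    qed
  qed
  have "card (U A) = card (fst ` A) + card (snd ` A)" unfolding U_def
    using d ac_facts(2)[OF A] by (simp add: card_Un_disjoint)
  also have "\<dots> = 2 * k" using card_image[OF inj_fst(1)[OF A]] card_image[OF inj_fst(2)[OF A]] ac_facts(3)[OF A] by simp
  finally show ?thesis .
qed

lemma U_Cset: assumes A: "A \<in> antichains_k (pairs m) prod_le k" shows "U A \<in> Cset m (2 * k)"
  using U_sub[OF A] U_card[OF A] unfolding Cset_def by simp

lemma U_below_above:
  assumes A: "A \<in> antichains_k (pairs m) prod_le k" and p: "p \<in> A"
  shows "card {u \<in> U A. u < fst p} = card {u \<in> U A. snd p < u}"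
proof -
  let ?S = "{q \<in> A. fst q < fst p}"
  have "{u \<in> U A. u < fst p} = fst ` ?S"
  proof
    show "{u \<in> U A. u < fst p} \<subseteq> fst ` ?S"
    proof
      fix u assume u: "u \<in> {u \<in> U A. u < fst p}"
      then obtain q where q: "q \<in> A" "u = fst q \<or> u = snd q" unfolding U_def by auto
      show "u \<in> fst ` ?S"
      proof (cases "u = fst q")
        case True then show ?thesis using q u by auto
      next
        case False
        then have "u = snd q" using q by auto
        then have "prod_le q p" using u ac_pos[OF A q(1)] ac_pos[OF A p] unfolding prod_le_def by auto
        then have "q = p" using ac_facts(4)[OF A q(1) p] by simp
        then show ?thesis using u \<open>u = snd q\<close> ac_pos[OF A p] by auto
      qed
    qed
    show "fst ` ?S \<subseteq> {u \<in> U A. u < fst p}" unfolding U_def by auto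
  qed
  moreover have "{u \<in> U A. snd p < u} = snd ` ?S"
  proof
    show "{u \<in> U A. snd p < u} \<subseteq> snd ` ?S"
    proof
      fix u assume u: "u \<in> {u \<in> U A. snd p < u}"
      then obtain q where q: "q \<in> A" "u = fst q \<or> u = snd q" unfolding U_def by auto
      have qp: "q \<noteq> p" using u q ac_pos[OF A p] by auto
      show "u \<in> snd ` ?S"
      proof (cases "u = fst q")
        case True
        then have "prod_le p q" using u ac_pos[OF A q(1)] ac_pos[OF A p] unfolding prod_le_def by auto
        then have False using ac_facts(4)[OF A p q(1)] qp by simp
        then show ?thesis ..
      next
        case False
        then have us: "u = snd q" using q by auto
        have "fst q < fst p"
        proof (rule ccontr)
          assume "\<not> fst q < fst p"
          then have "fst p < fst q" using ac_dist(1)[OF A p q(1)] qp by auto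
          then have "snd q < snd p" using ac_dist(4)[OF A p q(1)] qp by auto
          then show False using u us by auto
        qed
        then show ?thesis using us q by auto
      qed
    qed
    show "snd ` ?S \<subseteq> {u \<in> U A. snd p < u}"
    proof
      fix u assume "u \<in> snd ` ?S"
      then obtain q where q: "q \<in> A" "fst q < fst p" "u = snd q" by auto
      then have "q \<noteq> p" by auto
      then have "snd p < snd q" using ac_dist(4)[OF A q(1) p] q by auto
      then show "u \<in> {u \<in> U A. snd p < u}" using q unfolding U_def by auto
    qed
  qed
  moreover have "card (fst ` ?S) = card ?S" "card (snd ` ?S) = card ?S"
    using inj_fst[OF A] by (auto intro!: card_image inj_on_subset[of _ A])
  ultimately show ?thesis by simp
qed

lemma ss_less:
  fixes zs :: "nat list"
  assumes "sorted_wrt (<) zs" "i < length zs" "j < length zs"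
  shows "zs ! i < zs ! j \<longleftrightarrow> i < j"
proof
  assume "i < j" then show "zs ! i < zs ! j" using assms sorted_wrt_nth_less by blast
next
  assume h: "zs ! i < zs ! j"
  show "i < j"
  proof (rule ccontr)
    assume "\<not> i < j"
    then have "j < i \<or> j = i" by auto
    then show False
    proof
      assume "j < i" then have "zs ! j < zs ! i" using assms sorted_wrt_nth_less by blast
      then show False using h by simp
    next
      assume "j = i" then show False using h by simp
    qed
  qed
qed

lemma ss_le:
  fixes zs :: "nat list"
  assumes "sorted_wrt (<) zs" "i < length zs" "j < length zs"
  shows "zs ! i \<le> zs ! j \<longleftrightarrow> i \<le> j"
  using ss_less[OF assms(1,3,2)] by auto

lemma ss_below:
  fixes zs :: "nat list"
  assumes s: "sorted_wrt (<) zs" and i: "i < length zs"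
  shows "card {u \<in> set zs. u < zs ! i} = i"
proof -
  have d: "distinct zs" using s strict_sorted_iff by blast
  have "{u \<in> set zs. u < zs ! i} = (!) zs ` {..<i}"
  proof
    show "{u \<in> set zs. u < zs ! i} \<subseteq> (!) zs ` {..<i}"
    proof
      fix u assume "u \<in> {u \<in> set zs. u < zs ! i}"
      then obtain j where j: "j < length zs" "u = zs ! j" "zs ! j < zs ! i" by (auto simp: in_set_conv_nth)
      then have "j < i" using ss_less[OF s j(1) i] by simp
      then show "u \<in> (!) zs ` {..<i}" using j by auto
    qed
    show "(!) zs ` {..<i} \<subseteq> {u \<in> set zs. u < zs ! i}"
      using ss_less[OF s _ i] i by auto
  qed
  moreover have "inj_on ((!) zs) {..<i}" using d i by (intro inj_on_nth) auto
  ultimately show ?thesis by (simp add: card_image)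
qed

lemma ss_above:
  fixes zs :: "nat list"
  assumes s: "sorted_wrt (<) zs" and i: "i < length zs"
  shows "card {u \<in> set zs. zs ! i < u} = length zs - 1 - i"
proof -
  have d: "distinct zs" using s strict_sorted_iff by blast
  have "{u \<in> set zs. zs ! i < u} = (!) zs ` {i<..<length zs}"
  proof
    show "{u \<in> set zs. zs ! i < u} \<subseteq> (!) zs ` {i<..<length zs}"
    proof
      fix u assume "u \<in> {u \<in> set zs. zs ! i < u}"
      then obtain j where j: "j < length zs" "u = zs ! j" "zs ! i < zs ! j" by (auto simp: in_set_conv_nth)
      then have "i < j" using ss_less[OF s i j(1)] by simp
      then show "u \<in> (!) zs ` {i<..<length zs}" using j by auto
    qed
    show "(!) zs ` {i<..<length zs} \<subseteq> {u \<in> set zs. zs ! i < u}"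
      using ss_less[OF s i] i by auto
  qed
  moreover have "inj_on ((!) zs) {i<..<length zs}" using d i by (intro inj_on_nth) auto
  ultimately show ?thesis by (simp add: card_image)
qed



lemma sl_facts:
  assumes "finite Z"
  shows "sorted_wrt (<) (sorted_list_of_set Z)" "set (sorted_list_of_set Z) = Z"
    "length (sorted_list_of_set Z) = card Z" "distinct (sorted_list_of_set Z)"
  using assms by auto

lemma G_U:
  assumes A: "A \<in> antichains_k (pairs m) prod_le k"
  shows "Gm k (U A) = A"
proof -
  define zs where "zs = sorted_list_of_set (U A)"
  have fin: "finite (U A)" using U_fin[OF A] .
  have s: "sorted_wrt (<) zs" and st: "set zs = U A" and len: "length zs = 2 * k"
    using sl_facts[OF fin] U_card[OF A] unfolding zs_def by auto
  have sub: "A \<subseteq> Gm k (U A)"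
  proof
    fix p assume p: "p \<in> A"
    have "fst p \<in> set zs" "snd p \<in> set zs" using st p unfolding U_def by auto
    then obtain r j where rj: "r < 2 * k" "zs ! r = fst p" "j < 2 * k" "zs ! j = snd p"
      using len by (metis in_set_conv_nth)
    have "card {u \<in> U A. u < fst p} = r" using ss_below[OF s, of r] rj len st by simp
    moreover have "card {u \<in> U A. snd p < u} = 2 * k - 1 - j" using ss_above[OF s, of j] rj len st by simp
    ultimately have e: "r = 2 * k - 1 - j" using U_below_above[OF A p] by simp
    have "r < j" using ss_less[OF s, of r j] rj len ac_pos(2)[OF A p] by simp
    then have rk: "r < k" and jr: "j = 2 * k - 1 - r" using e rj by auto
    have "p = (zs ! r, zs ! (2 * k - 1 - r))" using rj jr by (simp add: prod_eq_iff)
    then show "p \<in> Gm k (U A)" unfolding Gm_def zs_def[symmetric] using rk by blast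
  qed
  have "finite (Gm k (U A))" unfolding Gm_def by simp
  moreover have "card (Gm k (U A)) \<le> k" unfolding Gm_def
    using card_image_le[of "{..<k}"] by (metis card_lessThan finite_lessThan)
  ultimately show ?thesis using card_seteq[OF _ sub] ac_facts(3)[OF A] by simp
qed

lemma G_ac:
  assumes Z: "Z \<in> Cset m (2 * k)"
  shows "Gm k Z \<in> antichains_k (pairs m) prod_le k" "U (Gm k Z) = Z"
proof -
  define zs where "zs = sorted_list_of_set Z"
  have Zs: "Z \<subseteq> {1..m}" "card Z = 2 * k" using Z unfolding Cset_def by auto
  have fin: "finite Z" using Zs finite_subset by blast
  have s: "sorted_wrt (<) zs" and st: "set zs = Z" and len: "length zs = 2 * k" and d: "distinct zs"
    using sl_facts[OF fin] Zs unfolding zs_def by auto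
  have G: "Gm k Z = (\<lambda>i. (zs ! i, zs ! (2*k - 1 - i))) ` {..<k}" unfolding Gm_def zs_def ..
  have inZ: "zs ! i \<in> Z" if "i < 2 * k" for i using that st len nth_mem by metis
  have "Gm k Z \<subseteq> pairs m"
  proof
    fix p assume "p \<in> Gm k Z"
    then obtain i where i: "i < k" "p = (zs ! i, zs ! (2*k - 1 - i))" using G by auto
    have "zs ! i < zs ! (2*k - 1 - i)" using ss_less[OF s, of i "2*k-1-i"] len i by simp
    moreover have "zs ! i \<in> Z" "zs ! (2*k - 1 - i) \<in> Z" using inZ i by auto
    ultimately show "p \<in> pairs m" using i Zs unfolding pairs_def by auto
  qed
  moreover have "finite (Gm k Z)" using G by simp
  moreover have "card (Gm k Z) = k"
  proof -
    have "inj_on (\<lambda>i. (zs ! i, zs ! (2*k - 1 - i))) {..<k}"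
    proof (rule inj_onI)
      fix i j assume "i \<in> {..<k}" "j \<in> {..<k}" "(zs ! i, zs ! (2*k - 1 - i)) = (zs ! j, zs ! (2*k - 1 - j))"
      then show "i = j" using nth_eq_iff_index_eq[OF d] len by auto
    qed
    then show ?thesis using G by (simp add: card_image)
  qed
  moreover have "\<forall>p\<in>Gm k Z. \<forall>q\<in>Gm k Z. prod_le p q \<longrightarrow> p = q"
  proof (intro ballI impI)
    fix p q assume "p \<in> Gm k Z" "q \<in> Gm k Z" "prod_le p q"
    then obtain i j where i: "i < k" "p = (zs ! i, zs ! (2*k - 1 - i))"
      and j: "j < k" "q = (zs ! j, zs ! (2*k - 1 - j))" and le: "prod_le p q" using G by auto
    have "zs ! i \<le> zs ! j" "zs ! (2*k - 1 - i) \<le> zs ! (2*k - 1 - j)" using le i j unfolding prod_le_def by auto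
    then have "i \<le> j" "2*k - 1 - i \<le> 2*k - 1 - j" using ss_le[OF s] len i j by auto
    then have "i = j" using i j by auto
    then show "p = q" using i j by simp
  qed
  ultimately show "Gm k Z \<in> antichains_k (pairs m) prod_le k" unfolding antichains_k_def by blast
  show "U (Gm k Z) = Z"
  proof
    show "U (Gm k Z) \<subseteq> Z" unfolding U_def G using inZ by auto
    show "Z \<subseteq> U (Gm k Z)"
    proof
      fix u assume "u \<in> Z"
      then obtain i where i: "i < 2 * k" "u = zs ! i" using st len by (metis in_set_conv_nth)
      show "u \<in> U (Gm k Z)"
      proof (cases "i < k")
        case True
        then have "(zs ! i, zs ! (2*k - 1 - i)) \<in> Gm k Z" using G by blast
        then show ?thesis unfolding U_def using i by force
      next
        case False
        then have "2*k - 1 - i < k" "2*k - 1 - (2*k - 1 - i) = i" using i by auto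
        then have "(zs ! (2*k - 1 - i), zs ! i) \<in> Gm k Z" using G by (metis (no_types, lifting) image_eqI lessThan_iff)
        then show ?thesis unfolding U_def using i by force
      qed
    qed
  qed
qed

lemma cnt_nth:
  fixes xs :: "nat list"
  assumes s: "sorted_wrt (<) xs"
  shows "cnt (set xs) t = card {i. i < length xs \<and> xs ! i \<le> t}"
proof -
  have d: "distinct xs" using s strict_sorted_iff by blast
  have "{x \<in> set xs. x \<le> t} = (!) xs ` {i. i < length xs \<and> xs ! i \<le> t}"
    by (auto simp: in_set_conv_nth)
  moreover have "inj_on ((!) xs) {i. i < length xs \<and> xs ! i \<le> t}" using d by (intro inj_on_nth) auto
  ultimately show ?thesis unfolding cnt_def by (simp add: card_image)
qed

lemma C_le_cle:
  assumes fS: "finite S" and fT: "finite T" and c: "card S = card T"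
  shows "C_le S T \<longleftrightarrow> cle S T"
proof -
  define xs where "xs = sorted_list_of_set S"
  define ys where "ys = sorted_list_of_set T"
  have sx: "sorted_wrt (<) xs" "set xs = S" and sy: "sorted_wrt (<) ys" "set ys = T"
    using sl_facts fS fT unfolding xs_def ys_def by auto
  have len: "length xs = length ys" using sl_facts fS fT c unfolding xs_def ys_def by simp
  have C: "C_le S T \<longleftrightarrow> (\<forall>i < length xs. xs ! i \<le> ys ! i)"
    unfolding C_le_def xs_def[symmetric] ys_def[symmetric] using len by (simp add: list_all2_conv_all_nth)
  show ?thesis
  proof
    assume "C_le S T"
    then have h: "\<forall>i < length xs. xs ! i \<le> ys ! i" using C by simp
    show "cle S T" unfolding cle_def
    proof
      fix t
      have "{i. i < length ys \<and> ys ! i \<le> t} \<subseteq> {i. i < length xs \<and> xs ! i \<le> t}"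
        using h len by fastforce
      then have "card {i. i < length ys \<and> ys ! i \<le> t} \<le> card {i. i < length xs \<and> xs ! i \<le> t}"
        by (intro card_mono) auto
      then show "cnt T t \<le> cnt S t" using cnt_nth[OF sx(1)] cnt_nth[OF sy(1)] sx(2) sy(2) by metis
    qed
  next
    assume cl: "cle S T"
    show "C_le S T" unfolding C
    proof (intro allI impI, rule ccontr)
      fix i assume i: "i < length xs" and "\<not> xs ! i \<le> ys ! i"
      then have lt: "ys ! i < xs ! i" by simp
      let ?t = "ys ! i"
      have "{..i} \<subseteq> {j. j < length ys \<and> ys ! j \<le> ?t}" using ss_le[OF sy(1)] i len by auto
      then have "card {..i} \<le> card {j. j < length ys \<and> ys ! j \<le> ?t}" by (intro card_mono) auto
      then have c1: "Suc i \<le> cnt T ?t" using cnt_nth[OF sy(1)] sy(2) by simp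
      have "{j. j < length xs \<and> xs ! j \<le> ?t} \<subseteq> {..<i}"
      proof
        fix j assume j: "j \<in> {j. j < length xs \<and> xs ! j \<le> ?t}"
        show "j \<in> {..<i}"
        proof (rule ccontr)
          assume "j \<notin> {..<i}"
          then have "xs ! i \<le> xs ! j" using ss_le[OF sx(1)] i j by auto
          then show False using j lt by auto
        qed
      qed
      then have "card {j. j < length xs \<and> xs ! j \<le> ?t} \<le> card {..<i}" by (intro card_mono) auto
      then have c2: "cnt S ?t \<le> i" using cnt_nth[OF sx(1)] sx(2) by simp
      show False using cl c1 c2 unfolding cle_def by (metis not_less_eq_eq order_trans)
    qed
  qed
qed



lemma U_insert: "U (insert a C) = insert (fst a) (insert (snd a) (U C))"
  unfolding U_def by auto

lemma cnt_insert:
  assumes "finite S" "x \<notin> S"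
  shows "cnt (insert x S) t = cnt S t + (if x \<le> t then 1 else 0)"
proof -
  have "{y \<in> insert x S. y \<le> t} = (if x \<le> t then insert x {y \<in> S. y \<le> t} else {y \<in> S. y \<le> t})" by auto
  then show ?thesis unfolding cnt_def using assms by simp
qed

lemma not_in_U_rest:
  assumes A: "A \<in> antichains_k (pairs m) prod_le k" and a: "a \<in> A" and C: "C \<subseteq> A - {a}"
  shows "fst a \<notin> U C" "snd a \<notin> U C"
proof -
  have "fst a \<noteq> fst q \<and> fst a \<noteq> snd q \<and> snd a \<noteq> snd q \<and> snd a \<noteq> fst q" if "q \<in> C" for q
  proof -
    have q: "q \<in> A" "q \<noteq> a" using that C by auto
    show ?thesis using ac_dist[OF A a q(1)] ac_dist(3)[OF A q(1) a] q(2) by auto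
  qed
  then show "fst a \<notin> U C" "snd a \<notin> U C" unfolding U_def by auto
qed

lemma cnt_U_insert:
  assumes A: "A \<in> antichains_k (pairs m) prod_le k" and a: "a \<in> A" and C: "C \<subseteq> A - {a}"
  shows "cnt (U (insert a C)) t = cnt (U C) t + (if fst a \<le> t then 1 else 0) + (if snd a \<le> t then 1 else 0)"
proof -
  have fC: "finite C" using ac_facts(2)[OF A] C finite_subset by blast
  have fU: "finite (U C)" using fC unfolding U_def by simp
  have ne: "fst a \<noteq> snd a" using ac_pos(2)[OF A a] by simp
  have "cnt (U (insert a C)) t = cnt (insert (snd a) (U C)) t + (if fst a \<le> t then 1 else 0)"
    unfolding U_insert using cnt_insert[of "insert (snd a) (U C)" "fst a"] fU not_in_U_rest[OF A a C] ne by simp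
  also have "\<dots> = cnt (U C) t + (if fst a \<le> t then 1 else 0) + (if snd a \<le> t then 1 else 0)"
    using cnt_insert[OF fU not_in_U_rest(2)[OF A a C]] by simp
  finally show ?thesis .
qed

lemma prec_cle:
  assumes pr: "prec_k (pairs m) prod_le k A B"
  shows "cle (U A) (U B)"
proof -
  have A: "A \<in> antichains_k (pairs m) prod_le k" and B: "B \<in> antichains_k (pairs m) prod_le k"
    using pr unfolding prec_k_def by blast+
  obtain a b where ab: "A - B = {a}" "B - A = {b}" "prod_le a b"
    using pr unfolding prec_k_def by blast
  define C where "C = A - {a}"
  have a: "a \<in> A" and b: "b \<in> B" using ab by blast+
  have CB: "C = B - {b}" using ab unfolding C_def by blast
  have eA: "A = insert a C" using a unfolding C_def by blast
  have eB: "B = insert b C" using b unfolding CB by blast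
  show ?thesis unfolding cle_def
  proof
    fix t
    have "cnt (U A) t = cnt (U C) t + (if fst a \<le> t then 1 else 0) + (if snd a \<le> t then 1 else 0)"
      using cnt_U_insert[OF A a, of C t] eA unfolding C_def by simp
    moreover have "cnt (U B) t = cnt (U C) t + (if fst b \<le> t then 1 else 0) + (if snd b \<le> t then 1 else 0)"
      using cnt_U_insert[OF B b, of C t] eB unfolding CB by simp
    ultimately show "cnt (U B) t \<le> cnt (U A) t" using ab(3) unfolding prod_le_def by auto
  qed
qed

lemma lek_cle:
  assumes "le_k (pairs m) prod_le k A B"
  shows "cle (U A) (U B)"
  using assms unfolding le_k_def
proof (induction rule: rtranclp_induct)
  case base then show ?case unfolding cle_def by simp
next
  case (step y z)
  then show ?case using prec_cle[OF step(2)] unfolding cle_def by (meson order_trans)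
qed

lemma cnt_Suc:
  assumes "finite Z"
  shows "cnt Z (Suc t) = cnt Z t + (if Suc t \<in> Z then 1 else 0)"
proof -
  have "{y \<in> Z. y \<le> Suc t} = (if Suc t \<in> Z then insert (Suc t) {y \<in> Z. y \<le> t} else {y \<in> Z. y \<le> t})" by (auto simp: le_Suc_eq)
  then show ?thesis unfolding cnt_def using assms by simp
qed

lemma cnt_0: "cnt Z 0 = (if 0 \<in> Z then 1 else 0)"
proof -
  have "{y \<in> Z. y \<le> 0} = (if 0 \<in> Z then {0} else {})" by auto
  then show ?thesis unfolding cnt_def by simp
qed

lemma cnt_eq_imp:
  assumes "finite Z" "finite W" "\<forall>t. cnt Z t = cnt W t"
  shows "Z = W"
proof (rule set_eqI)
  fix x show "x \<in> Z \<longleftrightarrow> x \<in> W"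
  proof (cases x)
    case 0
    have "cnt Z 0 = cnt W 0" using assms(3) by blast
    then show ?thesis unfolding 0 cnt_0 by (simp split: if_splits)
  next
    case (Suc t)
    have "cnt Z (Suc t) = cnt W (Suc t)" "cnt Z t = cnt W t" using assms(3) by blast+
    then show ?thesis unfolding Suc cnt_Suc[OF assms(1)] cnt_Suc[OF assms(2)] by (simp split: if_splits)
  qed
qed

lemma cnt_ge:
  assumes "S \<subseteq> {1..m}" "m \<le> t"
  shows "cnt S t = card S"
proof -
  have "{y \<in> S. y \<le> t} = S" using assms by auto
  then show ?thesis unfolding cnt_def by simp
qed

lemma cnt_mono: "finite S \<Longrightarrow> t \<le> t' \<Longrightarrow> cnt S t \<le> cnt S t'"
  unfolding cnt_def by (intro card_mono) auto

lemma step_choice: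
  assumes Z: "Z \<subseteq> {1..m}" and W: "W \<subseteq> {1..m}" and c: "card Z = card W"
    and t: "cnt W t < cnt Z t"
  shows "\<exists>z\<in>Z. cnt W z < cnt Z z \<and> Suc z \<notin> Z \<and> Suc z \<le> m"
proof -
  have fZ: "finite Z" and fW: "finite W" using Z W finite_subset by blast+
  define S where "S = {z \<in> Z. cnt W z < cnt Z z}"
  have fS: "finite S" using fZ unfolding S_def by simp
  have "{v \<in> Z. v \<le> t} \<noteq> {}" using t unfolding cnt_def by (metis card.empty not_less0)
  moreover have fT: "finite {v \<in> Z. v \<le> t}" using fZ by simp
  ultimately have z0: "Max {v \<in> Z. v \<le> t} \<in> {v \<in> Z. v \<le> t}" (is "?z0 \<in> _") by (rule Max_in[rotated])
  have "{v \<in> Z. v \<le> ?z0} = {v \<in> Z. v \<le> t}"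
    using z0 Max_ge[OF fT] by fastforce
  then have "cnt Z ?z0 = cnt Z t" unfolding cnt_def by simp
  moreover have "cnt W ?z0 \<le> cnt W t" using cnt_mono[OF fW] z0 by simp
  ultimately have "?z0 \<in> S" using t z0 unfolding S_def by simp
  then have neS: "S \<noteq> {}" by blast
  define z where "z = Max S"
  have zS: "z \<in> S" unfolding z_def using fS neS by simp
  have zmax: "\<And>y. y \<in> S \<Longrightarrow> y \<le> z" unfolding z_def using fS by simp
  have zZ: "z \<in> Z" and zc: "cnt W z < cnt Z z" using zS unfolding S_def by auto
  have nz: "Suc z \<notin> Z"
  proof
    assume sz: "Suc z \<in> Z"
    have "cnt Z (Suc z) = cnt Z z + 1" using cnt_Suc[OF fZ] sz by simp
    moreover have "cnt W (Suc z) \<le> cnt W z + 1" using cnt_Suc[OF fW, of z] by simp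
    ultimately have "Suc z \<in> S" using sz zc unfolding S_def by simp
    then show False using zmax by fastforce
  qed
  have "z \<le> m" using zZ Z by auto
  moreover have "z \<noteq> m"
  proof
    assume "z = m"
    then have "cnt Z z = cnt W z" using cnt_ge[OF Z] cnt_ge[OF W] c by simp
    then show False using zc by simp
  qed
  ultimately show ?thesis using zZ zc nz by auto
qed

lemma cnt_move:
  assumes fZ: "finite Z" and z: "z \<in> Z" and nz: "Suc z \<notin> Z"
  shows "cnt (insert (Suc z) (Z - {z})) t = (if t = z then cnt Z t - 1 else cnt Z t)"
proof -
  have f2: "finite (Z - {z})" using fZ by simp
  have n2: "Suc z \<notin> Z - {z}" using nz by simp
  have "cnt (insert (Suc z) (Z - {z})) t = cnt (Z - {z}) t + (if Suc z \<le> t then 1 else 0)"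
    using cnt_insert[OF f2 n2] .
  moreover have "cnt Z t = cnt (Z - {z}) t + (if z \<le> t then 1 else 0)"
    using cnt_insert[OF f2, of z t] z by (simp add: insert_absorb)
  ultimately show ?thesis by auto
qed

lemma step_build:
  assumes A: "A \<in> antichains_k (pairs m) prod_le k" and z: "z \<in> U A" and nz: "Suc z \<notin> U A"
    and zm: "Suc z \<le> m"
  shows "\<exists>A'. prec_k (pairs m) prod_le k A A' \<and> U A' = insert (Suc z) (U A - {z})"
proof -
  obtain p where p: "p \<in> A" "z = fst p \<or> z = snd p" using z unfolding U_def by auto
  obtain x y where pxy: "p = (x, y)" by fastforce
  have r: "1 \<le> x" "x < y" "y \<le> m" using ac_pos[OF A p(1)] pxy by auto
  define C where "C = A - {p}"
  have fC: "finite C" using ac_facts(2)[OF A] unfolding C_def by simp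
  have eA: "A = insert p C" using p(1) unfolding C_def by blast
  have pC: "p \<notin> C" unfolding C_def by simp
  have UA: "U A = insert x (insert y (U C))" using eA pxy U_insert by simp
  have nxy: "x \<notin> U C" "y \<notin> U C" using not_in_U_rest[OF A p(1), of C] pxy unfolding C_def by auto
  have gen: "\<exists>A'. prec_k (pairs m) prod_le k A A' \<and> U A' = insert (fst p') (insert (snd p') (U C))"
    if pp: "p' \<in> pairs m" "prod_le p p'" "p \<noteq> p'" "p' \<notin> A"
      and inc: "\<And>q. q \<in> C \<Longrightarrow> \<not> prod_le q p' \<and> \<not> prod_le p' q" for p'
  proof -
    define A' where "A' = insert p' C"
    have p'C: "p' \<notin> C" using pp(4) unfolding C_def by simp
    have "A' \<subseteq> pairs m" using pp(1) ac_facts(1)[OF A] unfolding A'_def C_def by auto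
    moreover have "finite A'" using fC unfolding A'_def by simp
    moreover have "card A' = k"
    proof -
      have "card A = Suc (card C)" using eA pC fC by simp
      then show ?thesis unfolding A'_def using fC p'C ac_facts(3)[OF A] by simp
    qed
    moreover have "\<forall>a\<in>A'. \<forall>b\<in>A'. prod_le a b \<longrightarrow> a = b"
    proof (intro ballI impI)
      fix a b assume "a \<in> A'" "b \<in> A'" "prod_le a b"
      then show "a = b" using inc ac_facts(4)[OF A] unfolding A'_def C_def by blast
    qed
    ultimately have A'ac: "A' \<in> antichains_k (pairs m) prod_le k" unfolding antichains_k_def by blast
    have "A - A' = {p}" using eA pp(3) pC unfolding A'_def by blast
    moreover have "A' - A = {p'}" using pp(4) eA unfolding A'_def by blast
    ultimately have "prec_k (pairs m) prod_le k A A'"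
      unfolding prec_k_def using A A'ac pp(2,3) by blast
    moreover have "U A' = insert (fst p') (insert (snd p') (U C))" unfolding A'_def U_insert ..
    ultimately show ?thesis by blast
  qed
  have Cd: "\<And>q. q \<in> C \<Longrightarrow> \<not> prod_le q p \<and> \<not> prod_le p q"
    using ac_facts(4)[OF A] p(1) unfolding C_def by blast
  have UCd: "\<And>q. q \<in> C \<Longrightarrow> fst q \<in> U C \<and> snd q \<in> U C" unfolding U_def by auto
  show ?thesis
  proof (cases "z = x")
    case True
    have sy: "Suc x \<noteq> y" using nz UA True by auto
    have pp: "(Suc x, y) \<in> pairs m" using r sy unfolding pairs_def by auto
    have "(Suc x, y) \<notin> A" using nz True unfolding U_def by force
    moreover have "prod_le p (Suc x, y)" "p \<noteq> (Suc x, y)" using pxy unfolding prod_le_def by auto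
    moreover have "\<not> prod_le q (Suc x, y) \<and> \<not> prod_le (Suc x, y) q" if q: "q \<in> C" for q
    proof -
      have "fst q \<noteq> Suc x" using UCd[OF q] nz True UA by auto
      then show ?thesis using Cd[OF q] pxy unfolding prod_le_def by auto
    qed
    ultimately obtain A' where "prec_k (pairs m) prod_le k A A'" "U A' = insert (Suc x) (insert y (U C))"
      using gen[OF pp] by auto
    moreover have "insert (Suc x) (insert y (U C)) = insert (Suc z) (U A - {z})"
      using UA True nxy r by auto
    ultimately show ?thesis by auto
  next
    case False
    then have zy: "z = y" using p pxy by auto
    have pp: "(x, Suc y) \<in> pairs m" using r zm zy unfolding pairs_def by auto
    have "(x, Suc y) \<notin> A" using nz zy unfolding U_def by force
    moreover have "prod_le p (x, Suc y)" "p \<noteq> (x, Suc y)" using pxy unfolding prod_le_def by auto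
    moreover have "\<not> prod_le q (x, Suc y) \<and> \<not> prod_le (x, Suc y) q" if q: "q \<in> C" for q
    proof -
      have "snd q \<noteq> Suc y" using UCd[OF q] nz zy UA by auto
      then show ?thesis using Cd[OF q] pxy unfolding prod_le_def by auto
    qed
    ultimately obtain A' where "prec_k (pairs m) prod_le k A A'" "U A' = insert x (insert (Suc y) (U C))"
      using gen[OF pp] by auto
    moreover have "insert x (insert (Suc y) (U C)) = insert (Suc z) (U A - {z})"
      using UA zy nxy r by auto
    ultimately show ?thesis by auto
  qed
qed



lemma cle_lek:
  assumes A0: "A0 \<in> antichains_k (pairs m) prod_le k" and B: "B \<in> antichains_k (pairs m) prod_le k"
    and c0: "cle (U A0) (U B)"
  shows "le_k (pairs m) prod_le k A0 B"
proof -
  define D where "D = (\<lambda>A'. \<Sum>t\<le>m. cnt (U A') t - cnt (U B) t)"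
  have "\<forall>A. A \<in> antichains_k (pairs m) prod_le k \<longrightarrow> cle (U A) (U B) \<longrightarrow> D A = d \<longrightarrow> le_k (pairs m) prod_le k A B" for d
  proof (induction d rule: less_induct)
    case (less d)
    show ?case
    proof (intro allI impI)
      fix A assume A: "A \<in> antichains_k (pairs m) prod_le k" and c: "cle (U A) (U B)" and dA: "D A = d"
      show "le_k (pairs m) prod_le k A B"
      proof (cases "U A = U B")
        case True
        then have "A = B" using G_U[OF A] G_U[OF B] by metis
        then show ?thesis unfolding le_k_def by simp
      next
        case False
        have "\<exists>t. cnt (U B) t < cnt (U A) t"
        proof (rule ccontr)
          assume "\<not> (\<exists>t. cnt (U B) t < cnt (U A) t)"
          then have "\<forall>t. cnt (U A) t = cnt (U B) t" using c unfolding cle_def by (meson le_antisym not_less)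
          then show False using cnt_eq_imp[OF U_fin[OF A] U_fin[OF B]] False by blast
        qed
        then obtain t where t: "cnt (U B) t < cnt (U A) t" by blast
        have cc: "card (U A) = card (U B)" using U_card[OF A] U_card[OF B] by simp
        obtain z where z: "z \<in> U A" "cnt (U B) z < cnt (U A) z" "Suc z \<notin> U A" "Suc z \<le> m"
          using step_choice[OF U_sub[OF A] U_sub[OF B] cc t] by blast
        obtain A' where pr: "prec_k (pairs m) prod_le k A A'" and UA': "U A' = insert (Suc z) (U A - {z})"
          using step_build[OF A z(1) z(3) z(4)] by blast
        have A': "A' \<in> antichains_k (pairs m) prod_le k" using pr unfolding prec_k_def by blast
        have cn: "cnt (U A') s = (if s = z then cnt (U A) s - 1 else cnt (U A) s)" for s
          using cnt_move[OF U_fin[OF A] z(1) z(3)] UA' by simp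
        have c': "cle (U A') (U B)" unfolding cle_def
        proof
          fix s show "cnt (U B) s \<le> cnt (U A') s"
            using cn[of s] z(2) c unfolding cle_def by (cases "s = z") auto
        qed
        have "D A' < D A" unfolding D_def
        proof (rule sum_strict_mono_ex1)
          show "finite {..m}" by simp
          show "\<forall>x\<in>{..m}. cnt (U A') x - cnt (U B) x \<le> cnt (U A) x - cnt (U B) x"
            using cn by (simp add: diff_le_mono)
          show "\<exists>a\<in>{..m}. cnt (U A') a - cnt (U B) a < cnt (U A) a - cnt (U B) a"
            using cn[of z] z(2) z(4) by (intro bexI[of _ z]) auto
        qed
        then have "le_k (pairs m) prod_le k A' B" using less.IH dA A' c' by blast
        moreover have "le_k (pairs m) prod_le k A A'" using pr unfolding le_k_def by blast
        ultimately show ?thesis unfolding le_k_def by (meson rtranclp_trans)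
      qed
    qed
  qed
  then show ?thesis using A0 c0 by blast
qed

lemma iso_main:
  "poset_iso (antichains_k (pairs m) prod_le k) (le_k (pairs m) prod_le k) (Cset m (2 * k)) C_le"
proof -
  have "bij_betw U (antichains_k (pairs m) prod_le k) (Cset m (2 * k))"
    by (rule bij_betw_byWitness[where f'="Gm k"]) (auto simp: G_U U_Cset G_ac)
  moreover have "\<forall>A\<in>antichains_k (pairs m) prod_le k. \<forall>B\<in>antichains_k (pairs m) prod_le k.
      le_k (pairs m) prod_le k A B \<longleftrightarrow> C_le (U A) (U B)"
  proof (intro ballI)
    fix A B assume A: "A \<in> antichains_k (pairs m) prod_le k" and B: "B \<in> antichains_k (pairs m) prod_le k"
    have "C_le (U A) (U B) \<longleftrightarrow> cle (U A) (U B)"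
      using C_le_cle[OF U_fin[OF A] U_fin[OF B]] U_card[OF A] U_card[OF B] by simp
    then show "le_k (pairs m) prod_le k A B \<longleftrightarrow> C_le (U A) (U B)"
      using lek_cle cle_lek[OF A B] by blast
  qed
  ultimately show ?thesis unfolding poset_iso_def by blast
qed

theorem proposition4p1:
  fixes n k :: nat
  assumes "k \<le> (n + 2) div 2"
  shows "poset_iso
           (antichains_k (order_ideals (grid n) prod_le) (\<subseteq>) k)
           (le_k (order_ideals (grid n) prod_le) (\<subseteq>) k)
           (antichains_k (Cset (n + 2) 2) C_le k)
           (le_k (Cset (n + 2) 2) C_le k)
       \<and> poset_iso
           (antichains_k (Cset (n + 2) 2) C_le k)
           (le_k (Cset (n + 2) 2) C_le k)
           (Cset (n + 2) (2 * k))
           C_le"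
proof
  have isoJC: "poset_iso (order_ideals (grid n) prod_le) (\<subseteq>) (Cset (n + 2) 2) C_le"
    using poset_iso_trans[OF poset_iso_sym[OF isoPJ] isoPC] .
  show "poset_iso
           (antichains_k (order_ideals (grid n) prod_le) (\<subseteq>) k)
           (le_k (order_ideals (grid n) prod_le) (\<subseteq>) k)
           (antichains_k (Cset (n + 2) 2) C_le k)
           (le_k (Cset (n + 2) 2) C_le k)"
    using iso_antichains[OF isoJC] .
  show "poset_iso
           (antichains_k (Cset (n + 2) 2) C_le k)
           (le_k (Cset (n + 2) 2) C_le k)
           (Cset (n + 2) (2 * k))
           C_le"
    using poset_iso_trans[OF iso_antichains[OF poset_iso_sym[OF isoPC]] iso_main] .
qed

end
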